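(* Let $\mathcal{G}$ be a network of type $\mathcal{C}^1$ with exactly two stubborn agents $s_1,s_2$, whose opinions evolve by the Friedkin–Johnsen model $\mathbf{x}(k+1)=(I-\beta)W\mathbf{x}(k)+\beta\mathbf{x}(0)$, let $m$ be a global communicator, and let $\mathcal{T}_1,\dots,\mathcal{T}_4$ be defined relative to $m$. Let $(a,b,d)$ be a permissible non-redundant edge modification. (A) The modification increases the influence centrality $c_{s_1}$ if either C1: $a$ satisfies (i) $a\in\mathcal{T}_1$ and (ii) every simple path from $m$ to $a$ passes through $s_1$, while $d$ fails (i) or (ii) (or both) (i.e. $d\notin\mathcal{T}_1$, or some simple path from $m$ to $d$ avoids $s_1$); or C2: $a\in\mathcal{T}_4$ and $d\in\mathcal{T}_2$. (B) Symmetrically, the modification increases $c_{s_2}$ if either C1: $a\in\mathcal{T}_2$ and every simple path from $m$ to $a$ passes through $s_2$, while $d$ fails at least one of these two conditions (with $s_2,\mathcal{T}_2$ in place of $s_1,\mathcal{T}_1$); or C2: $a\in\mathcal{T}_4$ and $d\in\mathcal{T}_1$.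
   Context: Let $\mathcal{G}=(\mathcal{V},\mathcal{E})$, $\mathcal{V}=\{1,\dots,n\}$, be a directed graph, where an edge $(i,j)$ means information flows from $i$ to $j$. Its weighted adjacency matrix $W=[w_{ij}]$ is row-stochastic with $w_{ij}>0$ iff $(j,i)\in\mathcal{E}$ (self-loops allowed). In the Friedkin–Johnsen model, $\beta=\mathrm{diag}(\beta_1,\dots,\beta_n)$ with $\beta_i\in[0,1]$, and agent $i$ is stubborn if $\beta_i>0$. Here exactly two agents $s_1,s_2$ are stubborn, with $\beta_{s_1},\beta_{s_2}\in(0,1)$. The influence centrality vector is $\mathbf{c}=P^T\mathbb{1}_n/n$ with $P=(I_n-(I_n-\beta)W)^{-1}\beta$; $c_i$ is the influence centrality of agent $i$ (and $c_{s_1}+c_{s_2}=1$). "Increases the influence centrality of $s_i$" means $c_{s_i}$ is strictly larger after the modification. Type $\mathcal{C}^1$: $\mathcal{G}$ is strongly connected and some node $m$ belongs to every cycle of $\mathcal{G}$ other than self-loops; such an $m$ is a global communicator. Given a global communicator $m$, a direct path from $i$ to $j$ is a path from $i$ to $j$ that does not pass through $m$. The nodes are classified as: $\mathcal{T}_1$: nodes having a direct path from $s_1$ but not from $s_2$; $\mathcal{T}_2$: direct path from $s_2$ but not from $s_1$; $\mathcal{T}_3$: direct paths from both; $\mathcal{T}_4$: from neither. By convention $s_1\in\mathcal{T}_1$, $s_2\in\mathcal{T}_2$, $m\in\mathcal{T}_3$, except that if $s_1$ has a direct path to $s_2$ then $s_2$ and every node with a direct path from $s_2$ belong to $\mathcal{T}_3$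 (so $\mathcal{T}_2=\emptyset$). Edge modification $(a,b,d)$: for distinct nodes $a,b,d$ with $w_{bd}>0$ and some $0<w<w_{bd}$, replace $w_{ba}$ by $w_{ba}+w$ (adding edge $(a,b)$ if absent) and $w_{bd}$ by $w_{bd}-w$, so the in-degree (row sum) of $b$ is unchanged. It is permissible if the modified network is still of type $\mathcal{C}^1$. It is redundant if it changes the influence centrality of neither stubborn agent, and non-redundant otherwise. *)

theory Defs
  imports "HOL-Analysis.Analysis"
begin

text \<open>Nodes are the elements of a finite type 'n; W $ i $ j is the weight w_ij.
  An edge (i,j) (information flows from i to j) exists iff w_ji > 0.\<close>

definition row_stochastic :: "real^'n^'n \<Rightarrow> bool" where
  "row_stochastic W \<longleftrightarrow> (\<forall>i j. W $ i $ j \<ge> 0) \<and> (\<forall>i. (\<Sum>j\<in>UNIV. W $ i $ j) = 1)"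

definition edge :: "real^'n^'n \<Rightarrow> 'n \<Rightarrow> 'n \<Rightarrow> bool" where
  "edge W i j \<longleftrightarrow> W $ j $ i > 0"

definition is_walk :: "real^'n^'n \<Rightarrow> 'n list \<Rightarrow> bool" where
  "is_walk W xs \<longleftrightarrow> xs \<noteq> [] \<and> (\<forall>k. Suc k < length xs \<longrightarrow> edge W (xs ! k) (xs ! Suc k))"

definition simple_path :: "real^'n^'n \<Rightarrow> 'n \<Rightarrow> 'n \<Rightarrow> 'n list \<Rightarrow> bool" where
  "simple_path W i j xs \<longleftrightarrow> is_walk W xs \<and> distinct xs \<and> hd xs = i \<and> last xs = j"

definition nontrivial_cycle :: "real^'n^'n \<Rightarrow> 'n list \<Rightarrow> bool" where
  "nontrivial_cycle W xs \<longleftrightarrow> is_walk W xs \<and> distinct xs \<and> length xs \<ge> 2 \<and> edge W (last xs) (hd xs)"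

definition strongly_connected :: "real^'n^'n \<Rightarrow> bool" where
  "strongly_connected W \<longleftrightarrow> (\<forall>i j. (i, j) \<in> {(u, v). edge W u v}\<^sup>*)"

definition global_communicator :: "real^'n^'n \<Rightarrow> 'n \<Rightarrow> bool" where
  "global_communicator W m \<longleftrightarrow> (\<forall>xs. nontrivial_cycle W xs \<longrightarrow> m \<in> set xs)"

definition type_C1 :: "real^'n^'n \<Rightarrow> bool" where
  "type_C1 W \<longleftrightarrow> strongly_connected W \<and> (\<exists>m. global_communicator W m)"

definition direct_path :: "real^'n^'n \<Rightarrow> 'n \<Rightarrow> 'n \<Rightarrow> 'n \<Rightarrow> bool" where
  "direct_path W m i j \<longleftrightarrow> (\<exists>xs. is_walk W xs \<and> hd xs = i \<and> last xs = j \<and> m \<notin> set xs)"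

text \<open>Classes T1..T4 (returned as 1..4), including the conventions.\<close>
definition tclass :: "real^'n^'n \<Rightarrow> 'n \<Rightarrow> 'n \<Rightarrow> 'n \<Rightarrow> 'n \<Rightarrow> nat" where
  "tclass W m s1 s2 j =
     (if j = m then 3
      else if j = s1 then 1
      else if direct_path W m s1 s2 \<and> (j = s2 \<or> direct_path W m s2 j) then 3
      else if j = s2 then 2
      else if direct_path W m s1 j \<and> \<not> direct_path W m s2 j then 1
      else if direct_path W m s2 j \<and> \<not> direct_path W m s1 j then 2
      else if direct_path W m s1 j \<and> direct_path W m s2 j then 3
      else 4)"

definition diagm :: "('n \<Rightarrow> real) \<Rightarrow> real^'n^'n" where
  "diagm \<beta> = (\<chi> i j. if i = j then \<beta> i else 0)"

definition FJ_P :: "('n \<Rightarrow> real) \<Rightarrow> real^'n^'n \<Rightarrow> real^'n^'n" where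
  "FJ_P \<beta> W = matrix_inv (mat 1 - (mat 1 - diagm \<beta>) ** W) ** diagm \<beta>"

definition influence_centrality :: "('n::finite \<Rightarrow> real) \<Rightarrow> real^'n^'n \<Rightarrow> 'n \<Rightarrow> real" where
  "influence_centrality \<beta> W i = (\<Sum>j\<in>UNIV. FJ_P \<beta> W $ j $ i) / real CARD('n)"

definition modify :: "real^'n^'n \<Rightarrow> 'n \<Rightarrow> 'n \<Rightarrow> 'n \<Rightarrow> real \<Rightarrow> real^'n^'n" where
  "modify W a b d w = (\<chi> i j. if i = b \<and> j = a then W $ b $ a + w
                              else if i = b \<and> j = d then W $ b $ d - w
                              else W $ i $ j)"

end

theory Submission
  imports Defs
begin
lemma succ_nth: "successively P xs \<longleftrightarrow> (\<forall>k. Suc k < length xs \<longrightarrow> P (xs ! k) (xs ! Suc k))"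
proof (induction P xs rule: successively.induct)
  case (3 P x y xs)
  show ?case
  proof
    assume "successively P (x # y # xs)"
    then show "\<forall>k. Suc k < length (x # y # xs) \<longrightarrow> P ((x # y # xs) ! k) ((x # y # xs) ! Suc k)"
      using 3 by (auto simp: less_Suc_eq_0_disj)
  next
    assume H: "\<forall>k. Suc k < length (x # y # xs) \<longrightarrow> P ((x # y # xs) ! k) ((x # y # xs) ! Suc k)"
    have "P x y" using H[rule_format, of 0] by simp
    moreover have "\<forall>k. Suc k < length (y # xs) \<longrightarrow> P ((y # xs) ! k) ((y # xs) ! Suc k)"
      using H by (metis Suc_less_eq length_Cons nth_Cons_Suc)
    ultimately show "successively P (x # y # xs)" using 3 by simp
  qed
qed auto

lemma is_walk_succ: "is_walk W xs \<longleftrightarrow> xs \<noteq> [] \<and> successively (edge W) xs"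
  unfolding is_walk_def succ_nth by blast

lemma dp_snoc:
  assumes "direct_path W x i j" "edge W j k" "k \<noteq> x"
  shows "direct_path W x i k"
proof -
  obtain xs where xs: "is_walk W xs" "hd xs = i" "last xs = j" "x \<notin> set xs"
    using assms(1) unfolding direct_path_def by blast
  have "is_walk W (xs @ [k])" using xs assms(2)
    by (auto simp: is_walk_succ successively_append_iff)
  moreover have "hd (xs @ [k]) = i" using xs by (auto simp: is_walk_def)
  ultimately show ?thesis using xs assms(3) unfolding direct_path_def
    by (metis Un_iff empty_iff empty_set last_snoc list.simps(15) set_append singletonD)
qed

lemma dp_refl: "x \<noteq> i \<Longrightarrow> direct_path W x i i"
  unfolding direct_path_def by (rule exI[of _ "[i]"]) (simp add: is_walk_def)

lemma dp_ne: "direct_path W x i j \<Longrightarrow> i \<noteq> x \<and> j \<noteq> x"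
  unfolding direct_path_def is_walk_def by (metis hd_in_set last_in_set)

lemma walk_to_simple:
  "is_walk W xs \<Longrightarrow> \<exists>ys. is_walk W ys \<and> distinct ys \<and> hd ys = hd xs \<and> last ys = last xs \<and> set ys \<subseteq> set xs"
proof (induction "length xs" arbitrary: xs rule: less_induct)
  case less
  show ?case
  proof (cases "distinct xs")
    case True then show ?thesis using less by blast
  next
    case False
    then obtain p y q r where d: "xs = p @ [y] @ q @ [y] @ r" using not_distinct_decomp by blast
    let ?zs = "p @ [y] @ r"
    have sx: "successively (edge W) xs" using less.prems by (simp add: is_walk_succ)
    have "successively (edge W) ?zs" using sx unfolding d
      by (auto simp: successively_append_iff successively_Cons)
    then have wz: "is_walk W ?zs" by (simp add: is_walk_succ)
    have "length ?zs < length xs" using d by simp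
    from less.hyps[OF this wz] obtain ys where ys: "is_walk W ys" "distinct ys" "hd ys = hd ?zs" "last ys = last ?zs" "set ys \<subseteq> set ?zs" by blast
    have "hd ?zs = hd xs" using d by (cases p) auto
    moreover have "last ?zs = last xs" using d by (cases r) auto
    moreover have "set ?zs \<subseteq> set xs" using d by auto
    ultimately show ?thesis using ys by (intro exI[of _ ys]) auto
  qed
qed

lemma dp_simple:
  assumes "direct_path W s m a"
  shows "\<exists>xs. simple_path W m a xs \<and> s \<notin> set xs"
  using assms walk_to_simple unfolding direct_path_def simple_path_def by blast


definition Lop :: "('n::finite \<Rightarrow> real) \<Rightarrow> real^'n^'n \<Rightarrow> ('n \<Rightarrow> real) \<Rightarrow> 'n \<Rightarrow> real" where
  "Lop \<beta> W v i = v i - (1 - \<beta> i) * (\<Sum>j\<in>UNIV. W$i$j * v j)"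

lemma sc_cross:
  assumes sc: "strongly_connected W" and i: "i \<in> S" and z: "z \<notin> S"
  shows "\<exists>i\<in>S. \<exists>k. k \<notin> S \<and> W$i$k > 0"
proof -
  have "(z, i) \<in> {(u, v). edge W u v}\<^sup>*" using sc unfolding strongly_connected_def by blast
  then have "i \<in> S \<longrightarrow> (\<exists>i\<in>S. \<exists>k. k \<notin> S \<and> W$i$k > 0)"
  proof (induction rule: rtrancl_induct)
    case base then show ?case using z by blast
  next
    case (step y y')
    then show ?case unfolding edge_def by blast
  qed
  then show ?thesis using i by blast
qed

lemma avg_ge:
  assumes rs: "row_stochastic W" and H: "\<forall>k. W$i$k > 0 \<longrightarrow> v k \<ge> \<mu>"
  shows "(\<Sum>k\<in>UNIV. W$i$k * v k) \<ge> \<mu>"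
proof -
  have nn: "\<forall>k. W$i$k \<ge> 0" and s1: "(\<Sum>k\<in>UNIV. W$i$k) = 1" using rs unfolding row_stochastic_def by auto
  have "(\<Sum>k\<in>UNIV. W$i$k * v k) - \<mu> = (\<Sum>k\<in>UNIV. W$i$k * (v k - \<mu>))"
    using s1 by (simp add: algebra_simps sum_subtractf sum_distrib_left[symmetric])
  also have "\<dots> \<ge> 0"
  proof (rule sum_nonneg)
    fix k
    show "0 \<le> W$i$k * (v k - \<mu>)"
      using nn[rule_format, of k] H[rule_format, of k] by (cases "W$i$k > 0") auto
  qed
  finally show ?thesis by simp
qed

lemma avg_gt:
  assumes rs: "row_stochastic W" and H: "\<forall>k. W$i$k > 0 \<longrightarrow> v k \<ge> \<mu>"
    and j: "W$i$j > 0" "v j > \<mu>"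
  shows "(\<Sum>k\<in>UNIV. W$i$k * v k) > \<mu>"
proof -
  have nn: "\<forall>k. W$i$k \<ge> 0" and s1: "(\<Sum>k\<in>UNIV. W$i$k) = 1" using rs unfolding row_stochastic_def by auto
  have "(\<Sum>k\<in>UNIV. W$i$k * v k) - \<mu> = (\<Sum>k\<in>UNIV. W$i$k * (v k - \<mu>))"
    using s1 by (simp add: algebra_simps sum_subtractf sum_distrib_left[symmetric])
  also have "\<dots> > 0"
  proof (rule sum_pos2[of UNIV j])
    show "0 < W$i$j * (v j - \<mu>)" using j by simp
    fix k
    show "0 \<le> W$i$k * (v k - \<mu>)"
      using nn[rule_format, of k] H[rule_format, of k] by (cases "W$i$k > 0") auto
  qed auto
  finally show ?thesis by simp
qed

lemma avg_le:
  assumes rs: "row_stochastic W" and H: "\<forall>k. W$i$k > 0 \<longrightarrow> v k \<le> \<mu>"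
  shows "(\<Sum>k\<in>UNIV. W$i$k * v k) \<le> \<mu>"
proof -
  have "(\<Sum>k\<in>UNIV. W$i$k * (- v k)) \<ge> - \<mu>" using avg_ge[OF rs, where i=i and v="\<lambda>k. - v k" and \<mu>="-\<mu>"] H by auto
  then show ?thesis by (simp add: sum_negf)
qed

lemma avg_lt:
  assumes rs: "row_stochastic W" and H: "\<forall>k. W$i$k > 0 \<longrightarrow> v k \<le> \<mu>"
    and j: "W$i$j > 0" "v j < \<mu>"
  shows "(\<Sum>k\<in>UNIV. W$i$k * v k) < \<mu>"
proof -
  have "(\<Sum>k\<in>UNIV. W$i$k * (- v k)) > - \<mu>" using avg_gt[OF rs, where i=i and v="\<lambda>k. - v k" and \<mu>="-\<mu>" and j=j] H j by auto
  then show ?thesis by (simp add: sum_negf)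
qed

lemma super:
  fixes v :: "'n::finite \<Rightarrow> real"
  assumes rs: "row_stochastic W" and sc: "strongly_connected W"
    and br: "\<forall>i. 0 \<le> \<beta> i \<and> \<beta> i \<le> 1" and bs: "\<beta> s > 0"
    and L: "\<forall>i. Lop \<beta> W v i \<ge> 0"
  shows "v i \<ge> 0"
proof (rule ccontr)
  assume neg: "\<not> v i \<ge> 0"
  define \<mu> where "\<mu> = Min (range v)"
  have mle: "\<And>k. \<mu> \<le> v k" unfolding \<mu>_def by simp
  have "Min (range v) \<in> range v" by (rule Min_in) auto
  then obtain i1 where i1: "v i1 = \<mu>" unfolding \<mu>_def by (metis imageE)
  have mneg: "\<mu> < 0" using mle[of i] neg by simp
  define S where "S = {k. v k = \<mu>}"
  have avgge: "(\<Sum>k\<in>UNIV. W$k'$k * v k) \<ge> \<mu>" for k' using avg_ge[OF rs] mle by blast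
  have Li: "v k \<ge> (1 - \<beta> k) * (\<Sum>j\<in>UNIV. W$k$j * v j)" for k using L unfolding Lop_def by (simp add: algebra_simps)
  have "s \<notin> S"
  proof
    assume "s \<in> S"
    then have vs: "v s = \<mu>" unfolding S_def by simp
    have "(1 - \<beta> s) * (\<Sum>j\<in>UNIV. W$s$j * v j) \<ge> (1 - \<beta> s) * \<mu>"
      using avgge[of s] br by (intro mult_left_mono) auto
    moreover have "(1 - \<beta> s) * \<mu> > \<mu>" using bs mneg by (simp add: algebra_simps mult_neg_pos)
    ultimately show False using Li[of s] vs by simp
  qed
  then obtain k0 k where k0: "k0 \<in> S" and k: "k \<notin> S" "W$k0$k > 0"
    using sc_cross[OF sc, of i1 S] i1 S_def by blast
  have vk: "v k > \<mu>" using mle[of k] k(1) S_def by force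
  have gt: "(\<Sum>j\<in>UNIV. W$k0$j * v j) > \<mu>"
    by (rule avg_gt[OF rs, where i=k0 and v=v and \<mu>=\<mu> and j=k]) (use mle k vk in auto)
  have "v k0 > \<mu>"
  proof (cases "(\<Sum>j\<in>UNIV. W$k0$j * v j) \<ge> 0")
    case True
    then have "(1 - \<beta> k0) * (\<Sum>j\<in>UNIV. W$k0$j * v j) \<ge> 0" using br by simp
    then show ?thesis using Li[of k0] mneg by simp
  next
    case False
    then have "(1 - \<beta> k0) * (\<Sum>j\<in>UNIV. W$k0$j * v j) \<ge> (\<Sum>j\<in>UNIV. W$k0$j * v j)"
      using br[rule_format, of k0] by (simp add: algebra_simps mult_nonneg_nonpos)
    then show ?thesis using Li[of k0] gt by simp
  qed
  then show False using k0 S_def by simp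
qed


locale col =
  fixes W :: "real^'n::finite^'n" and \<beta> :: "'n \<Rightarrow> real" and s t :: 'n and v :: "'n \<Rightarrow> real"
  assumes rs: "row_stochastic W" and sc: "strongly_connected W"
    and br: "\<forall>i. 0 \<le> \<beta> i \<and> \<beta> i \<le> 1" and bs: "\<beta> s > 0"
    and bo: "\<forall>i. i \<noteq> s \<and> i \<noteq> t \<longrightarrow> \<beta> i = 0"
    and Lv: "\<forall>i. Lop \<beta> W v i = (if i = s then \<beta> s else 0)"
begin

lemma nonneg: "v i \<ge> 0"
  by (rule super[OF rs sc br bs]) (use Lv bs in auto)

lemma eqn: "i \<noteq> s \<Longrightarrow> v i = (1 - \<beta> i) * (\<Sum>j\<in>UNIV. W$i$j * v j)"
  using Lv[rule_format, of i] unfolding Lop_def by simp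

lemma avg_nonneg: "(\<Sum>j\<in>UNIV. W$i$j * v j) \<ge> 0"
  using avg_ge[OF rs, where i=i and v=v and \<mu>=0] nonneg by auto

lemma le_avg: "i \<noteq> s \<Longrightarrow> v i \<le> (\<Sum>j\<in>UNIV. W$i$j * v j)"
proof -
  assume "i \<noteq> s"
  then have "v i = (1 - \<beta> i) * (\<Sum>j\<in>UNIV. W$i$j * v j)" by (rule eqn)
  also have "\<dots> \<le> (\<Sum>j\<in>UNIV. W$i$j * v j)"
    using avg_nonneg[of i] br[rule_format, of i] by (simp add: algebra_simps)
  finally show ?thesis .
qed

lemma max_s: "v j \<le> v s"
proof (rule ccontr)
  assume neg: "\<not> v j \<le> v s"
  define \<mu> where "\<mu> = Max (range v)"
  have mle: "\<And>k. v k \<le> \<mu>" unfolding \<mu>_def by simp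
  have "Max (range v) \<in> range v" by (rule Max_in) auto
  then obtain i1 where i1: "v i1 = \<mu>" unfolding \<mu>_def by (metis imageE)
  define S where "S = {k. v k = \<mu>}"
  have "s \<notin> S" using neg mle[of j] S_def by auto
  then obtain k0 k where k0: "k0 \<in> S" and k: "k \<notin> S" "W$k0$k > 0"
    using sc_cross[OF sc, of i1 S] i1 S_def by blast
  have vk: "v k < \<mu>" using mle[of k] k(1) S_def by force
  have lt: "(\<Sum>j\<in>UNIV. W$k0$j * v j) < \<mu>"
    by (rule avg_lt[OF rs, where i=k0 and v=v and \<mu>=\<mu> and j=k]) (use mle k vk in auto)
  have "k0 \<noteq> s" using k0 \<open>s \<notin> S\<close> by auto
  then have "v k0 < \<mu>" using le_avg[of k0] lt by simp
  then show False using k0 S_def by simp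
qed

lemma le_m:
  assumes im: "i \<noteq> m" and nd: "\<not> direct_path W m s i"
  shows "v i \<le> v m"
proof (rule ccontr)
  assume neg: "\<not> v i \<le> v m"
  define R where "R = {k. k \<noteq> m \<and> \<not> direct_path W m s k}"
  have iR: "i \<in> R" using im nd R_def by simp
  define \<mu> where "\<mu> = Max (v ` R)"
  have mle: "\<And>k. k \<in> R \<Longrightarrow> v k \<le> \<mu>" unfolding \<mu>_def by simp
  have "Max (v ` R) \<in> v ` R" by (rule Max_in) (use iR in auto)
  then obtain i1 where i1: "i1 \<in> R" "v i1 = \<mu>" unfolding \<mu>_def by (metis imageE)
  define S where "S = {k \<in> R. v k = \<mu>}"
  have vm: "v m < \<mu>" using neg mle[OF iR] by simp
  have "m \<notin> S" using R_def S_def by simp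
  then obtain k0 k where k0: "k0 \<in> S" and k: "k \<notin> S" "W$k0$k > 0"
    using sc_cross[OF sc, of i1 S] i1 S_def by blast
  have k0R: "k0 \<in> R" "v k0 = \<mu>" using k0 S_def by auto
  have k0s: "k0 \<noteq> s"
  proof
    assume "k0 = s"
    then have "s \<noteq> m" using k0R R_def by simp
    then have "direct_path W m s s" by (metis dp_refl)
    then show False using k0R R_def \<open>k0 = s\<close> by simp
  qed
  have inR: "k' \<in> R" if "W$k0$k' > 0" "k' \<noteq> m" for k'
  proof -
    have "\<not> direct_path W m s k'"
    proof
      assume "direct_path W m s k'"
      moreover have "edge W k' k0" using that unfolding edge_def by simp
      ultimately have "direct_path W m s k0" using dp_snoc k0R R_def by fastforce
      then show False using k0R R_def by simp
    qed
    then show ?thesis using that R_def by simp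
  qed
  have all: "\<forall>k'. W$k0$k' > 0 \<longrightarrow> v k' \<le> \<mu>"
    using inR mle vm by (metis less_eq_real_def)
  have vk: "v k < \<mu>"
  proof (cases "k = m")
    case True then show ?thesis using vm by simp
  next
    case False then have "k \<in> R" using inR k by simp
    then show ?thesis using mle[of k] k S_def by force
  qed
  have lt: "(\<Sum>j\<in>UNIV. W$k0$j * v j) < \<mu>"
    by (rule avg_lt[OF rs, where i=k0 and v=v and \<mu>=\<mu> and j=k]) (use all k vk in auto)
  then have "v k0 < \<mu>" using le_avg[OF k0s] by simp
  then show False using k0R by simp
qed

lemma ge_m:
  assumes im: "i \<noteq> m" and nd: "\<not> direct_path W m t i"
  shows "v i \<ge> v m"
proof (rule ccontr)
  assume neg: "\<not> v i \<ge> v m"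
  define R where "R = {k. k \<noteq> m \<and> \<not> direct_path W m t k}"
  have iR: "i \<in> R" using im nd R_def by simp
  define \<mu> where "\<mu> = Min (v ` R)"
  have mle: "\<And>k. k \<in> R \<Longrightarrow> \<mu> \<le> v k" unfolding \<mu>_def by simp
  have "Min (v ` R) \<in> v ` R" by (rule Min_in) (use iR in auto)
  then obtain i1 where i1: "i1 \<in> R" "v i1 = \<mu>" unfolding \<mu>_def by (metis imageE)
  define S where "S = {k \<in> R. v k = \<mu>}"
  have vm: "v m > \<mu>" using neg mle[OF iR] by simp
  have "m \<notin> S" using R_def S_def by simp
  then obtain k0 k where k0: "k0 \<in> S" and k: "k \<notin> S" "W$k0$k > 0"
    using sc_cross[OF sc, of i1 S] i1 S_def by blast
  have k0R: "k0 \<in> R" "v k0 = \<mu>" using k0 S_def by auto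
  have k0t: "k0 \<noteq> t"
  proof
    assume "k0 = t"
    then have "t \<noteq> m" using k0R R_def by simp
    then have "direct_path W m t t" by (metis dp_refl)
    then show False using k0R R_def \<open>k0 = t\<close> by simp
  qed
  have k0s: "k0 \<noteq> s"
  proof
    assume "k0 = s"
    then have "v k0 \<ge> v m" using max_s by simp
    then show False using vm k0R by simp
  qed
  have inR: "k' \<in> R" if "W$k0$k' > 0" "k' \<noteq> m" for k'
  proof -
    have "\<not> direct_path W m t k'"
    proof
      assume "direct_path W m t k'"
      moreover have "edge W k' k0" using that unfolding edge_def by simp
      ultimately have "direct_path W m t k0" using dp_snoc k0R R_def by fastforce
      then show False using k0R R_def by simp
    qed
    then show ?thesis using that R_def by simp
  qed
  have all: "\<forall>k'. W$k0$k' > 0 \<longrightarrow> v k' \<ge> \<mu>"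
    using inR mle vm by (metis less_eq_real_def)
  have vk: "v k > \<mu>"
  proof (cases "k = m")
    case True then show ?thesis using vm by simp
  next
    case False then have "k \<in> R" using inR k by simp
    then show ?thesis using mle[of k] k S_def by force
  qed
  have gt: "(\<Sum>j\<in>UNIV. W$k0$j * v j) > \<mu>"
    by (rule avg_gt[OF rs, where i=k0 and v=v and \<mu>=\<mu> and j=k]) (use all k vk in auto)
  have "\<beta> k0 = 0" using bo k0s k0t by blast
  then have "v k0 > \<mu>" using eqn[OF k0s] gt by simp
  then show False using k0R by simp
qed

lemma eq_s:
  assumes sm: "s \<noteq> m" and as: "a \<noteq> s" and nt: "\<not> direct_path W m t a" and ns: "\<not> direct_path W s m a"
  shows "v a \<ge> v s"
proof (rule ccontr)
  assume neg: "\<not> v a \<ge> v s"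
  define R where "R = {k. k \<noteq> s \<and> \<not> direct_path W m t k \<and> \<not> direct_path W s m k}"
  have iR: "a \<in> R" using as nt ns R_def by simp
  define \<mu> where "\<mu> = Min (v ` R)"
  have mle: "\<And>k. k \<in> R \<Longrightarrow> \<mu> \<le> v k" unfolding \<mu>_def by simp
  have "Min (v ` R) \<in> v ` R" by (rule Min_in) (use iR in auto)
  then obtain i1 where i1: "i1 \<in> R" "v i1 = \<mu>" unfolding \<mu>_def by (metis imageE)
  define S where "S = {k \<in> R. v k = \<mu>}"
  have vs: "v s > \<mu>" using neg mle[OF iR] by simp
  have "s \<notin> S" using R_def S_def by simp
  then obtain k0 k where k0: "k0 \<in> S" and k: "k \<notin> S" "W$k0$k > 0"
    using sc_cross[OF sc, of i1 S] i1 S_def by blast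
  have k0R: "k0 \<in> R" "v k0 = \<mu>" using k0 S_def by auto
  have k0m: "k0 \<noteq> m"
  proof
    assume "k0 = m"
    have "direct_path W s m m" using sm by (intro dp_refl) auto
    then show False using k0R R_def \<open>k0 = m\<close> by simp
  qed
  have k0t: "k0 \<noteq> t"
  proof
    assume "k0 = t"
    then have "t \<noteq> m" using k0m by simp
    then have "direct_path W m t t" by (metis dp_refl)
    then show False using k0R R_def \<open>k0 = t\<close> by simp
  qed
  have k0s: "k0 \<noteq> s" using k0R R_def by simp
  have inR: "k' \<in> R" if "W$k0$k' > 0" "k' \<noteq> s" for k'
  proof -
    have e: "edge W k' k0" using that unfolding edge_def by simp
    have "\<not> direct_path W m t k'"
    proof
      assume "direct_path W m t k'"
      then have "direct_path W m t k0" using dp_snoc e k0m by fastforce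
      then show False using k0R R_def by simp
    qed
    moreover have "\<not> direct_path W s m k'"
    proof
      assume "direct_path W s m k'"
      then have "direct_path W s m k0" using dp_snoc e k0s by fastforce
      then show False using k0R R_def by simp
    qed
    ultimately show ?thesis using that R_def by simp
  qed
  have all: "\<forall>k'. W$k0$k' > 0 \<longrightarrow> v k' \<ge> \<mu>"
    using inR mle vs by (metis less_eq_real_def)
  have vk: "v k > \<mu>"
  proof (cases "k = s")
    case True then show ?thesis using vs by simp
  next
    case False then have "k \<in> R" using inR k by simp
    then show ?thesis using mle[of k] k S_def by force
  qed
  have gt: "(\<Sum>j\<in>UNIV. W$k0$j * v j) > \<mu>"
    by (rule avg_gt[OF rs, where i=k0 and v=v and \<mu>=\<mu> and j=k]) (use all k vk in auto)
  have "\<beta> k0 = 0" using bo k0s k0t by blast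
  then have "v k0 > \<mu>" using eqn[OF k0s] gt by simp
  then show False using k0R by simp
qed

end


lemma Lop_lin:
  assumes rs: "row_stochastic W"
  shows "Lop \<beta> W (\<lambda>k. p * f k + q * g k + r) i = p * Lop \<beta> W f i + q * Lop \<beta> W g i + r * \<beta> i"
proof -
  have s1: "(\<Sum>k\<in>UNIV. W$i$k) = 1" using rs unfolding row_stochastic_def by auto
  have "(\<Sum>j\<in>UNIV. W$i$j * (p * f j + q * g j + r)) = p * (\<Sum>j\<in>UNIV. W$i$j * f j) + q * (\<Sum>j\<in>UNIV. W$i$j * g j) + r * (\<Sum>j\<in>UNIV. W$i$j)"
    by (simp add: algebra_simps sum.distrib sum_distrib_left)
  then show ?thesis unfolding Lop_def using s1 by (simp add: algebra_simps)
qed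

lemma Mv: "((mat 1 - (mat 1 - diagm \<beta>) ** W) *v x) $ i = Lop \<beta> W (\<lambda>j. x$j) i"
proof -
  have e: "((mat 1 - diagm \<beta>) ** W) $ i $ k = (1 - \<beta> i) * W$i$k" for k
  proof -
    have "((mat 1 - diagm \<beta>) ** W) $ i $ k = (\<Sum>l\<in>UNIV. if l = i then (1 - \<beta> i) * W$l$k else 0)"
      unfolding matrix_matrix_mult_def mat_def diagm_def by (simp only: vec_lambda_beta vector_minus_component, rule sum.cong) auto
    also have "\<dots> = (1 - \<beta> i) * W$i$k" by (simp add: sum.delta)
    finally show ?thesis .
  qed
  have "((mat 1 - (mat 1 - diagm \<beta>) ** W) *v x) $ i = (\<Sum>k\<in>UNIV. ((if i = k then 1 else 0) - (1 - \<beta> i) * W$i$k) * x$k)"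
    unfolding matrix_vector_mult_def using e by (auto simp: mat_def intro!: sum.cong)
  also have "\<dots> = x$i - (1 - \<beta> i) * (\<Sum>k\<in>UNIV. W$i$k * x$k)"
  proof -
    have "(\<Sum>k\<in>UNIV. ((if i = k then 1 else 0) - (1 - \<beta> i) * W$i$k) * x$k)
        = (\<Sum>k\<in>UNIV. (if k = i then x$k else 0) - (1 - \<beta> i) * (W$i$k * x$k))"
      by (rule sum.cong) (auto simp: algebra_simps)
    also have "\<dots> = (\<Sum>k\<in>UNIV. (if k = i then x$k else 0)) - (\<Sum>k\<in>UNIV. (1 - \<beta> i) * (W$i$k * x$k))"
      by (rule sum_subtractf)
    also have "\<dots> = x$i - (1 - \<beta> i) * (\<Sum>k\<in>UNIV. W$i$k * x$k)"
      by (simp add: sum.delta sum_distrib_left)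
    finally show ?thesis .
  qed
  finally show ?thesis unfolding Lop_def .
qed

lemma MM: "((mat 1 - (mat 1 - diagm \<beta>) ** W) ** P) $ i $ c = Lop \<beta> W (\<lambda>k. P$k$c) i"
proof -
  have "((mat 1 - (mat 1 - diagm \<beta>) ** W) ** P) $ i $ c = ((mat 1 - (mat 1 - diagm \<beta>) ** W) *v (\<chi> k. P$k$c)) $ i"
    unfolding matrix_matrix_mult_def matrix_vector_mult_def by simp
  then show ?thesis using Mv[of \<beta> W "\<chi> k. P$k$c" i] by simp
qed

lemma M_inv:
  fixes W :: "real^'n::finite^'n"
  assumes rs: "row_stochastic W" and sc: "strongly_connected W"
    and br: "\<forall>i. 0 \<le> \<beta> i \<and> \<beta> i \<le> 1" and bs: "\<beta> s > 0"
  shows "(mat 1 - (mat 1 - diagm \<beta>) ** W) ** matrix_inv (mat 1 - (mat 1 - diagm \<beta>) ** W) = mat 1"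
proof -
  let ?M = "mat 1 - (mat 1 - diagm \<beta>) ** W"
  have "inj ((*v) ?M)"
  proof (rule injI)
    fix x y :: "real^'n"
    assume eq: "?M *v x = ?M *v y"
    have L0: "Lop \<beta> W (\<lambda>k. 1 * (x$k) + (-1) * (y$k) + 0) i = 0" for i
      using Lop_lin[OF rs, of \<beta> 1 "\<lambda>k. x$k" "-1" "\<lambda>k. y$k" 0 i] Mv[of \<beta> W x i] Mv[of \<beta> W y i] eq by simp
    have L1: "Lop \<beta> W (\<lambda>k. (-1) * (x$k) + 1 * (y$k) + 0) i = 0" for i
      using Lop_lin[OF rs, of \<beta> "-1" "\<lambda>k. x$k" 1 "\<lambda>k. y$k" 0 i] Mv[of \<beta> W x i] Mv[of \<beta> W y i] eq by simp
    have "x$k - y$k \<ge> 0" for k using super[OF rs sc br bs, of "\<lambda>k. 1 * (x$k) + (-1) * (y$k) + 0" k] L0 by simp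
    moreover have "y$k - x$k \<ge> 0" for k using super[OF rs sc br bs, of "\<lambda>k. (-1) * (x$k) + 1 * (y$k) + 0" k] L1 by simp
    ultimately show "x = y" by (simp add: vec_eq_iff) (meson antisym diff_ge_0_iff_ge)
  qed
  then obtain B where "B ** ?M = mat 1" using matrix_left_invertible_injective by blast
  then have "?M ** B = mat 1" using matrix_left_right_inverse by blast
  then have ex: "\<exists>A'. ?M ** A' = mat 1 \<and> A' ** ?M = mat 1" using \<open>B ** ?M = mat 1\<close> by blast
  show ?thesis unfolding matrix_inv_def using someI_ex[OF ex] by blast
qed

lemma col_eq:
  fixes W :: "real^'n::finite^'n"
  assumes rs: "row_stochastic W" and sc: "strongly_connected W"
    and br: "\<forall>i. 0 \<le> \<beta> i \<and> \<beta> i \<le> 1" and bs: "\<beta> s > 0"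
  shows "Lop \<beta> W (\<lambda>k. FJ_P \<beta> W $ k $ c) i = (if i = c then \<beta> c else 0)"
proof -
  let ?M = "mat 1 - (mat 1 - diagm \<beta>) ** W"
  have "?M ** FJ_P \<beta> W = diagm \<beta>"
    unfolding FJ_P_def using M_inv[OF rs sc br bs] by (metis matrix_mul_assoc matrix_mul_lid)
  then show ?thesis using MM[of \<beta> W "FJ_P \<beta> W" i c] by (cases "i = c") (simp_all add: diagm_def)
qed


lemma mod_entry:
  assumes "a \<noteq> d"
  shows "modify W a b d w $ i $ j = W$i$j + (if i = b then (if j = a then w else 0) - (if j = d then w else 0) else 0)"
  using assms unfolding modify_def by auto

lemma mod_sum:
  assumes ad: "a \<noteq> d"
  shows "(\<Sum>j\<in>UNIV. modify W a b d w $ i $ j * v j) = (\<Sum>j\<in>UNIV. W$i$j * v j) + (if i = b then w * (v a - v d) else 0)"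
proof -
  have "(\<Sum>j\<in>UNIV. modify W a b d w $ i $ j * v j)
      = (\<Sum>j\<in>UNIV. W$i$j * v j + (if i = b then (if j = a then w * v j else 0) - (if j = d then w * v j else 0) else 0))"
    by (rule sum.cong) (auto simp: mod_entry[OF ad] algebra_simps)
  also have "\<dots> = (\<Sum>j\<in>UNIV. W$i$j * v j) + (if i = b then w * (v a - v d) else 0)"
    by (cases "i = b") (simp_all add: sum.distrib sum_subtractf sum.delta' algebra_simps)
  finally show ?thesis .
qed

lemma mod_rs:
  assumes rs: "row_stochastic W" and ad: "a \<noteq> d" and w: "0 < w" "w < W$b$d"
  shows "row_stochastic (modify W a b d w)"
  unfolding row_stochastic_def
proof safe
  fix i j
  show "0 \<le> modify W a b d w $ i $ j"
    using rs w unfolding row_stochastic_def mod_entry[OF ad]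
    by (auto simp: add_nonneg_nonneg)
next
  fix i
  show "(\<Sum>j\<in>UNIV. modify W a b d w $ i $ j) = 1"
    using mod_sum[OF ad, of W b w i "\<lambda>_. 1"] rs unfolding row_stochastic_def by simp
qed

lemma mod_Lop:
  assumes ad: "a \<noteq> d"
  shows "Lop \<beta> (modify W a b d w) v i = Lop \<beta> W v i - (if i = b then (1 - \<beta> b) * w * (v a - v d) else 0)"
  unfolding Lop_def mod_sum[OF ad] by (simp add: algebra_simps)

lemma compare:
  fixes W W' :: "real^'n::finite^'n"
  assumes rs': "row_stochastic W'" and sc': "strongly_connected W'"
    and br: "\<forall>i. 0 \<le> \<beta> i \<and> \<beta> i \<le> 1" and bs: "\<beta> s > 0"
    and L: "\<forall>i. Lop \<beta> W x i = e i" and L': "\<forall>i. Lop \<beta> W' x' i = e i"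
    and md: "\<forall>v i. Lop \<beta> W' v i = Lop \<beta> W v i - (if i = b then (1 - \<beta> b) * w * (v a - v d) else 0)"
    and bb: "\<beta> b < 1" and w: "w > 0"
  shows "(x a > x d \<longrightarrow> sum x' UNIV > sum x UNIV) \<and> (x a = x d \<longrightarrow> sum x' UNIV = sum x UNIV)"
proof -
  define K where "K = (1 - \<beta> b) * w * (x a - x d)"
  have Lx: "Lop \<beta> W' x i = e i - (if i = b then K else 0)" for i
    using md L K_def by simp
  have Ld: "Lop \<beta> W' (\<lambda>k. 1 * x' k + (-1) * x k + 0) i = (if i = b then K else 0)" for i
    using Lop_lin[OF rs', of \<beta> 1 x' "-1" x 0 i] L' Lx[of i] by auto
  have Ld2: "Lop \<beta> W' (\<lambda>k. (-1) * x' k + 1 * x k + 0) i = (if i = b then -K else 0)" for i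
    using Lop_lin[OF rs', of \<beta> "-1" x' 1 x 0 i] L' Lx[of i] by auto
  have rs'': "\<forall>k. W'$i$k \<ge> 0" for i using rs' unfolding row_stochastic_def by auto
  show ?thesis
  proof safe
    assume gt: "x a > x d"
    then have Kp: "K > 0" unfolding K_def using bb w by simp
    have nn: "x' k - x k \<ge> 0" for k
      using super[OF rs' sc' br bs, of "\<lambda>k. 1 * x' k + (-1) * x k + 0" k] Ld Kp by (simp add: less_imp_le)
    have avg: "(\<Sum>j\<in>UNIV. W'$b$j * (1 * x' j + (-1) * x j + 0)) \<ge> 0"
      using avg_ge[OF rs', where i=b and v="\<lambda>j. 1 * x' j + (-1) * x j + 0" and \<mu>=0] nn by simp
    have "x' b - x b \<ge> K"
      using Ld[of b] avg br[rule_format, of b] unfolding Lop_def by simp (smt (verit) mult_nonneg_nonneg)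
    then have "x' b - x b > 0" using Kp by simp
    then have "(\<Sum>k\<in>UNIV. x' k - x k) > 0" by (intro sum_pos2[of UNIV b]) (use nn in auto)
    then show "sum x' UNIV > sum x UNIV" by (simp add: sum_subtractf)
  next
    assume eq: "x a = x d"
    then have K0: "K = 0" unfolding K_def by simp
    have "x' k - x k \<ge> 0" for k
      using super[OF rs' sc' br bs, of "\<lambda>k. 1 * x' k + (-1) * x k + 0" k] Ld K0 by simp
    moreover have "x k - x' k \<ge> 0" for k
      using super[OF rs' sc' br bs, of "\<lambda>k. (-1) * x' k + 1 * x k + 0" k] Ld2 K0 by simp
    ultimately have "x' k = x k" for k by (meson antisym diff_ge_0_iff_ge)
    then show "sum x' UNIV = sum x UNIV" by simp
  qed
qed

lemma tc1:
  "tclass W m s1 s2 a = 1 \<Longrightarrow> a \<noteq> m \<and> (a = s1 \<or> (a \<noteq> s2 \<and> direct_path W m s1 a \<and> \<not> direct_path W m s2 a))"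
  unfolding tclass_def by (auto split: if_splits)

lemma tc2:
  "tclass W m s1 s2 a = 2 \<Longrightarrow> a \<noteq> m \<and> a \<noteq> s1 \<and> ((a = s2 \<and> \<not> direct_path W m s1 s2) \<or> (a \<noteq> s2 \<and> direct_path W m s2 a \<and> \<not> direct_path W m s1 a))"
  unfolding tclass_def by (auto split: if_splits)

lemma tc4:
  "tclass W m s1 s2 a = 4 \<Longrightarrow> a \<noteq> m \<and> a \<noteq> s1 \<and> a \<noteq> s2 \<and> \<not> direct_path W m s1 a \<and> \<not> direct_path W m s2 a"
  unfolding tclass_def by (auto split: if_splits)

theorem theorem2:
  fixes W :: "real^'n^'n" and \<beta> :: "'n \<Rightarrow> real"
    and s1 s2 m a b d :: 'n and w :: real
  assumes stoch: "row_stochastic W"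
    and C1: "type_C1 W"
    and gc: "global_communicator W m"
    and s12: "s1 \<noteq> s2"
    and beta_range: "\<forall>i. 0 \<le> \<beta> i \<and> \<beta> i \<le> 1"
    and beta_s1: "0 < \<beta> s1 \<and> \<beta> s1 < 1"
    and beta_s2: "0 < \<beta> s2 \<and> \<beta> s2 < 1"
    and beta_others: "\<forall>i. i \<noteq> s1 \<and> i \<noteq> s2 \<longrightarrow> \<beta> i = 0"
    and distinct_abd: "a \<noteq> b" "b \<noteq> d" "a \<noteq> d"
    and wbd: "W $ b $ d > 0"
    and w_range: "0 < w" "w < W $ b $ d"
    and permissible: "type_C1 (modify W a b d w)"
    and nonredundant: "influence_centrality \<beta> (modify W a b d w) s1 \<noteq> influence_centrality \<beta> W s1
                       \<or> influence_centrality \<beta> (modify W a b d w) s2 \<noteq> influence_centrality \<beta> W s2"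
  shows
    "(((tclass W m s1 s2 a = 1 \<and> (\<forall>xs. simple_path W m a xs \<longrightarrow> s1 \<in> set xs))
        \<and> \<not> (tclass W m s1 s2 d = 1 \<and> (\<forall>xs. simple_path W m d xs \<longrightarrow> s1 \<in> set xs)))
      \<or> (tclass W m s1 s2 a = 4 \<and> tclass W m s1 s2 d = 2)
      \<longrightarrow> influence_centrality \<beta> (modify W a b d w) s1 > influence_centrality \<beta> W s1)
   \<and> (((tclass W m s1 s2 a = 2 \<and> (\<forall>xs. simple_path W m a xs \<longrightarrow> s2 \<in> set xs))
        \<and> \<not> (tclass W m s1 s2 d = 2 \<and> (\<forall>xs. simple_path W m d xs \<longrightarrow> s2 \<in> set xs)))
      \<or> (tclass W m s1 s2 a = 4 \<and> tclass W m s1 s2 d = 1)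
      \<longrightarrow> influence_centrality \<beta> (modify W a b d w) s2 > influence_centrality \<beta> W s2)"
proof -
  let ?W' = "modify W a b d w"
  have sc: "strongly_connected W" using C1 unfolding type_C1_def by blast
  have sc': "strongly_connected ?W'" using permissible unfolding type_C1_def by blast
  have rs': "row_stochastic ?W'" using mod_rs[OF stoch distinct_abd(3) w_range] .
  have br: "\<forall>i. 0 \<le> \<beta> i \<and> \<beta> i \<le> 1" using beta_range .
  have bs1: "\<beta> s1 > 0" and bs2: "\<beta> s2 > 0" using beta_s1 beta_s2 by auto
  have bo: "\<forall>i. i \<noteq> s1 \<and> i \<noteq> s2 \<longrightarrow> \<beta> i = 0" using beta_others .
  have bo': "\<forall>i. i \<noteq> s2 \<and> i \<noteq> s1 \<longrightarrow> \<beta> i = 0" using beta_others by blast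
  have bb: "\<beta> b < 1" using beta_s1 beta_s2 beta_others by (cases "b = s1"; cases "b = s2") auto
  define x where "x = (\<lambda>k. FJ_P \<beta> W $ k $ s1)"
  define y where "y = (\<lambda>k. FJ_P \<beta> W $ k $ s2)"
  define x' where "x' = (\<lambda>k. FJ_P \<beta> ?W' $ k $ s1)"
  define y' where "y' = (\<lambda>k. FJ_P \<beta> ?W' $ k $ s2)"
  have Lx: "\<forall>i. Lop \<beta> W x i = (if i = s1 then \<beta> s1 else 0)"
    unfolding x_def using col_eq[OF stoch sc br bs1] by blast
  have Ly: "\<forall>i. Lop \<beta> W y i = (if i = s2 then \<beta> s2 else 0)"
    unfolding y_def using col_eq[OF stoch sc br bs1] by blast
  have Lx': "\<forall>i. Lop \<beta> ?W' x' i = (if i = s1 then \<beta> s1 else 0)"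
    unfolding x'_def using col_eq[OF rs' sc' br bs1] by blast
  have Ly': "\<forall>i. Lop \<beta> ?W' y' i = (if i = s2 then \<beta> s2 else 0)"
    unfolding y'_def using col_eq[OF rs' sc' br bs1] by blast
  interpret X: col W \<beta> s1 s2 x using stoch sc br bs1 bo Lx by unfold_locales
  interpret Y: col W \<beta> s2 s1 y using stoch sc br bs2 bo' Ly by unfold_locales
  have Lz: "Lop \<beta> W (\<lambda>k. 1 * x k + 1 * y k + (-1)) i = 0" for i
    using Lop_lin[OF stoch, of \<beta> 1 x 1 y "-1" i] Lx Ly bo s12 by (cases "i = s1"; cases "i = s2") auto
  have Lz2: "Lop \<beta> W (\<lambda>k. (-1) * x k + (-1) * y k + 1) i = 0" for i
    using Lop_lin[OF stoch, of \<beta> "-1" x "-1" y 1 i] Lx Ly bo s12 by (cases "i = s1"; cases "i = s2") auto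
  have xy: "x k + y k = 1" for k
  proof -
    have "x k + y k - 1 \<ge> 0" using super[OF stoch sc br bs1, of "\<lambda>k. 1 * x k + 1 * y k + (-1)" k] Lz by simp
    moreover have "1 - x k - y k \<ge> 0" using super[OF stoch sc br bs1, of "\<lambda>k. (-1) * x k + (-1) * y k + 1" k] Lz2 by simp
    ultimately show ?thesis by simp
  qed
  have md: "\<forall>v i. Lop \<beta> ?W' v i = Lop \<beta> W v i - (if i = b then (1 - \<beta> b) * w * (v a - v d) else 0)"
    using mod_Lop[OF distinct_abd(3)] by blast
  have cx: "(x a > x d \<longrightarrow> sum x' UNIV > sum x UNIV) \<and> (x a = x d \<longrightarrow> sum x' UNIV = sum x UNIV)"
    by (rule compare[OF rs' sc' br bs1 Lx Lx' md bb w_range(1)])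
  have cy: "(y a > y d \<longrightarrow> sum y' UNIV > sum y UNIV) \<and> (y a = y d \<longrightarrow> sum y' UNIV = sum y UNIV)"
    by (rule compare[OF rs' sc' br bs1 Ly Ly' md bb w_range(1)])
  have cp: "real CARD('n) > 0" by simp
  have icx: "influence_centrality \<beta> W s1 = sum x UNIV / real CARD('n)"
    "influence_centrality \<beta> ?W' s1 = sum x' UNIV / real CARD('n)"
    "influence_centrality \<beta> W s2 = sum y UNIV / real CARD('n)"
    "influence_centrality \<beta> ?W' s2 = sum y' UNIV / real CARD('n)"
    unfolding influence_centrality_def x_def y_def x'_def y'_def by simp_all
  have unchanged: "x a = x d \<Longrightarrow> False"
  proof -
    assume e: "x a = x d"
    then have "y a = y d" using xy[of a] xy[of d] by simp
    then show False using e cx cy nonredundant icx by simp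
  qed
  have keyA: "influence_centrality \<beta> ?W' s1 > influence_centrality \<beta> W s1" if "x a \<ge> x d"
  proof -
    have "x a > x d" using that unchanged by fastforce
    then have "sum x' UNIV > sum x UNIV" using cx by blast
    then show ?thesis using icx cp by (simp add: divide_strict_right_mono)
  qed
  have keyB: "influence_centrality \<beta> ?W' s2 > influence_centrality \<beta> W s2" if "y a \<ge> y d"
  proof -
    have "y a \<noteq> y d" using unchanged xy[of a] xy[of d] by auto
    then have "y a > y d" using that by simp
    then have "sum y' UNIV > sum y UNIV" using cy by blast
    then show ?thesis using icx cp by (simp add: divide_strict_right_mono)
  qed
  show ?thesis
  proof (intro conjI impI)
    assume H: "(tclass W m s1 s2 a = 1 \<and> (\<forall>xs. simple_path W m a xs \<longrightarrow> s1 \<in> set xs)) \<and>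
        \<not> (tclass W m s1 s2 d = 1 \<and> (\<forall>xs. simple_path W m d xs \<longrightarrow> s1 \<in> set xs)) \<or>
        tclass W m s1 s2 a = 4 \<and> tclass W m s1 s2 d = 2"
    show "influence_centrality \<beta> ?W' s1 > influence_centrality \<beta> W s1"
    proof (rule keyA)
      show "x a \<ge> x d"
      proof (cases "tclass W m s1 s2 a = 4 \<and> tclass W m s1 s2 d = 2")
        case True
        have a4: "a \<noteq> m" "\<not> direct_path W m s1 a" "\<not> direct_path W m s2 a" using tc4 True by blast+
        have d2: "d \<noteq> m" "\<not> direct_path W m s1 d" using tc2[of W m s1 s2 d] True by auto
        have "x a \<ge> x m" using X.ge_m[OF a4(1) a4(3)] .
        moreover have "x d \<le> x m" using X.le_m[OF d2] .
        ultimately show ?thesis by simp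
      next
        case False
        then have a1: "tclass W m s1 s2 a = 1" and pa: "\<forall>xs. simple_path W m a xs \<longrightarrow> s1 \<in> set xs"
          using H by blast+
        show ?thesis
        proof (cases "a = s1")
          case True then show ?thesis using X.max_s[of d] by simp
        next
          case False
          then have c: "a \<noteq> s2" "direct_path W m s1 a" "\<not> direct_path W m s2 a" using tc1[OF a1] by auto
          have sm: "s1 \<noteq> m" using dp_ne[OF c(2)] by simp
          have "\<not> direct_path W s1 m a" using dp_simple[of W s1 m a] pa by blast
          then have "x a \<ge> x s1" using X.eq_s[OF sm False c(3)] by blast
          then show ?thesis using X.max_s[of d] by simp
        qed
      qed
    qed
  next
    assume H: "(tclass W m s1 s2 a = 2 \<and> (\<forall>xs. simple_path W m a xs \<longrightarrow> s2 \<in> set xs)) \<and>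
        \<not> (tclass W m s1 s2 d = 2 \<and> (\<forall>xs. simple_path W m d xs \<longrightarrow> s2 \<in> set xs)) \<or>
        tclass W m s1 s2 a = 4 \<and> tclass W m s1 s2 d = 1"
    show "influence_centrality \<beta> ?W' s2 > influence_centrality \<beta> W s2"
    proof (rule keyB)
      show "y a \<ge> y d"
      proof (cases "tclass W m s1 s2 a = 4 \<and> tclass W m s1 s2 d = 1")
        case True
        have a4: "a \<noteq> m" "\<not> direct_path W m s1 a" "\<not> direct_path W m s2 a" using tc4 True by blast+
        have ya: "y a = y m" using Y.ge_m[OF a4(1) a4(2)] Y.le_m[OF a4(1) a4(3)] by simp
        have d1: "d \<noteq> m \<and> (d = s1 \<or> (d \<noteq> s2 \<and> direct_path W m s1 d \<and> \<not> direct_path W m s2 d))"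
          using tc1 True by blast
        show ?thesis
        proof (cases "d = s1")
          case True
          then show ?thesis using X.max_s[of a] xy[of a] xy[of d] by simp
        next
          case False
          then have "y d \<le> y m" using Y.le_m d1 by blast
          then show ?thesis using ya by simp
        qed
      next
        case False
        then have a2: "tclass W m s1 s2 a = 2" and pa: "\<forall>xs. simple_path W m a xs \<longrightarrow> s2 \<in> set xs"
          using H by blast+
        show ?thesis
        proof (cases "a = s2")
          case True then show ?thesis using Y.max_s[of d] by simp
        next
          case False
          then have c: "direct_path W m s2 a" "\<not> direct_path W m s1 a" using tc2[OF a2] by auto
          have sm: "s2 \<noteq> m" using dp_ne[OF c(1)] by simp
          have "\<not> direct_path W s2 m a" using dp_simple[of W s2 m a] pa by blast
          then have "y a \<ge> y s2" using Y.eq_s[OF sm False c(2)] by blast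
          then show ?thesis using Y.max_s[of d] by simp
        qed
      qed
    qed
  qed
qed

end
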